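(* Suppose $a<\mathcal U_L^{-1}$ and that $\mathbf X^{RSAA}\in\mathcal S_p$ satisfies the S$^3$ONC$(\mathbf Z_1^n)$ almost surely. Then $$\mathbb P\big[\,|\sigma_j(\mathbf X^{RSAA})|\notin(0,a\lambda)\ \text{for all } j=1,\dots,p\,\big]=1.$$
   Context: $\mathcal S_p$ is the cone of $p\times p$ symmetric positive semidefinite matrices; $\sigma_j(\mathbf X)$ is the $j$-th eigenvalue (singular value) of $\mathbf X$. $Z_1,\dots,Z_n$ are i.i.d. random vectors in $\mathcal W\subseteq\mathbb R^q$, $f:\mathcal S_p\times\mathcal W\to\mathbb R$ measurable, $\mathcal F_n(\mathbf X,\mathbf Z_1^n)=\frac1n\sum_i f(\mathbf X,Z_i)$. For $a,\lambda>0$, $P_\lambda(x)=\int_0^x\frac{[a\lambda-t]_+}{a}dt$ and $\mathcal F_{n,\lambda}(\mathbf X,\mathbf Z_1^n)=\mathcal F_n(\mathbf X,\mathbf Z_1^n)+\sum_{j=1}^pP_\lambda(\sigma_j(\mathbf X))$. $\mathcal U_L\ge1$ is a constant. A matrix $\hat{\mathbf X}\in\mathcal S_p$ satisfies S$^3$ONC$(\mathbf Z_1^n)$ if (a) $\nabla\mathcal F_{n,\lambda}(\hat{\mathbf X},\mathbf Z_1^n)=0$, and (b) for every $j$ with $\sigma_j(\hat{\mathbf X})\in(0,a\lambda)$, $\mathcal U_L+\frac{\partial^2P_\lambda(\sigma_j(\mathbf X))}{[\partial\sigma_j(\mathbf X)]^2}\big|_{\mathbf X=\hat{\mathbf X}}\ge0$.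 *)

theory Defs
  imports "HOL-Analysis.Analysis" "HOL-Probability.Probability"
    "HOL-Computational_Algebra.Polynomial" "HOL-Library.Multiset"
begin

definition psd_cone :: "(real^'p^'p) set" where
  "psd_cone = {X. transpose X = X \<and> (\<forall>v. 0 \<le> v \<bullet> (X *v v))}"

definition charpoly :: "real^'p^'p \<Rightarrow> real poly" where
  "charpoly X = det (\<chi> i j. (if i = j then [:0, 1:] else 0) - [:X $ i $ j:])"

text \<open>Eigenvalues with multiplicity, sorted in decreasing order; sigma X j is the j-th (j = 1..p).\<close>
definition eigs :: "real^'p^'p \<Rightarrow> real list" where
  "eigs X = rev (sorted_list_of_multiset (proots (charpoly X)))"

definition sigma :: "real^'p^'p \<Rightarrow> nat \<Rightarrow> real" where
  "sigma X j = eigs X ! (j - 1)"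

definition P_pen :: "real \<Rightarrow> real \<Rightarrow> real \<Rightarrow> real" where
  "P_pen a lam x = integral {0..x} (\<lambda>t. max (a * lam - t) 0 / a)"

definition F_n :: "(real^'p^'p \<Rightarrow> 'w \<Rightarrow> real) \<Rightarrow> nat \<Rightarrow> (nat \<Rightarrow> 'w) \<Rightarrow> real^'p^'p \<Rightarrow> real" where
  "F_n f n Zs X = (\<Sum>i=1..n. f X (Zs i)) / real n"

definition F_nlam :: "real \<Rightarrow> real \<Rightarrow> (real^'p^'p \<Rightarrow> 'w \<Rightarrow> real) \<Rightarrow> nat \<Rightarrow> (nat \<Rightarrow> 'w)
    \<Rightarrow> real^'p^'p \<Rightarrow> real" where
  "F_nlam a lam f n Zs X = F_n f n Zs X + (\<Sum>j=1..CARD('p). P_pen a lam (sigma X j))"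

definition S3ONC :: "real \<Rightarrow> real \<Rightarrow> real \<Rightarrow> (real^'p^'p \<Rightarrow> 'w \<Rightarrow> real) \<Rightarrow> nat \<Rightarrow> (nat \<Rightarrow> 'w)
    \<Rightarrow> real^'p^'p \<Rightarrow> bool" where
  "S3ONC a lam UL f n Zs X \<longleftrightarrow>
     X \<in> psd_cone \<and>
     (F_nlam a lam f n Zs has_derivative (\<lambda>_. 0)) (at X within psd_cone) \<and>
     (\<forall>j\<in>{1..CARD('p)}. sigma X j \<in> {0<..<a * lam} \<longrightarrow>
        0 \<le> UL + deriv (deriv (P_pen a lam)) (sigma X j))"

end

theory Submission
  imports Defs "HOL-Computational_Algebra.Fundamental_Theorem_Algebra"
begin


lemma degree_charpoly: "degree (charpoly (X::real^'p^'p)) = CARD('p)"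
proof -
  define M where "M = (\<chi> i j. (if i = j then [:0, 1:] else 0) - [:X $ i $ j:] :: real poly ^'p ^'p)"
  have Me: "M $ i $ j = (if i = j then [:- (X$i$j), 1:] else [:- (X$i$j):])" for i j
    unfolding M_def by simp
  define S where "S = {p. p permutes (UNIV::'p set)}"
  define g where "g = (\<lambda>p. of_int (sign p) * (\<Prod>i\<in>UNIV. M $ i $ p i) :: real poly)"
  have fS: "finite S" unfolding S_def by (simp add: finite_permutations)
  have idS: "id \<in> S" unfolding S_def by (simp add: permutes_id)
  have "charpoly X = g id + sum g (S - {id})"
    unfolding charpoly_def M_def[symmetric] det_def g_def S_def[symmetric]
    using fS idS by (simp add: sum.remove)
  moreover have d1: "degree (g id) = CARD('p)"
  proof -
    have "g id = (\<Prod>i\<in>UNIV. [:- (X$i$i), 1:])" unfolding g_def by (simp add: Me sign_id)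
    moreover have "degree (\<Prod>i\<in>(UNIV::'p set). [:- (X$i$i), 1:]) = CARD('p)"
      by (subst degree_prod_eq_sum_degree) auto
    ultimately show ?thesis by simp
  qed
  moreover have "degree (sum g (S - {id})) < CARD('p)"
  proof -
    have "degree (g p) \<le> CARD('p) - 1" if "p \<in> S - {id}" for p
    proof -
      from that obtain i0 where i0: "p i0 \<noteq> i0" unfolding S_def by (metis DiffE id_apply ext singletonI)
      have "degree (g p) \<le> degree (of_int (sign p) :: real poly) + degree (\<Prod>i\<in>UNIV. M $ i $ p i)"
        unfolding g_def by (rule degree_mult_le)
      also have "\<dots> = degree (\<Prod>i\<in>UNIV. M $ i $ p i)" by simp
      also have "\<dots> \<le> (\<Sum>i\<in>UNIV. degree (M $ i $ p i))"
        using degree_prod_sum_le[of UNIV "\<lambda>i. M $ i $ p i"] by (simp add: o_def)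
      also have "\<dots> \<le> (\<Sum>i\<in>UNIV. if i = i0 then 0 else 1)"
        by (rule sum_mono) (use i0 in \<open>auto simp: Me dest: sym\<close>)
      also have "\<dots> = CARD('p) - 1"
        by (simp add: sum.If_cases Compl_eq_Diff_UNIV card_Diff_singleton)
      finally show ?thesis .
    qed
    then have "degree (sum g (S - {id})) \<le> CARD('p) - 1"
      by (intro degree_sum_le) (use fS in auto)
    moreover have "CARD('p) > 0" by simp
    ultimately show ?thesis by linarith
  qed
  ultimately show ?thesis using d1 by (simp add: degree_add_eq_left)
qed



lemma poly_det: "poly (det (M :: 'a::comm_ring_1 poly^'n^'n)) c = det (\<chi> i j. poly (M$i$j) c)"
  unfolding det_def by (simp add: poly_sum poly_prod)

lemma map_poly_of_real_add: "map_poly (of_real :: real \<Rightarrow> 'a::{real_algebra_1}) (p + q) = map_poly of_real p + map_poly of_real q"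
  by (rule poly_eqI) (simp add: coeff_map_poly)

lemma map_poly_of_real_mult: "map_poly (of_real :: real \<Rightarrow> 'a::{real_algebra_1,comm_ring_1}) (p * q) = map_poly of_real p * map_poly of_real q"
  by (rule poly_eqI) (simp add: coeff_map_poly coeff_mult of_real_sum)

lemma map_poly_of_real_sum: "map_poly (of_real :: real \<Rightarrow> 'a::{real_algebra_1}) (sum f A) = (\<Sum>x\<in>A. map_poly of_real (f x))"
  by (induction A rule: infinite_finite_induct) (auto simp: map_poly_of_real_add)

lemma map_poly_of_real_prod: "map_poly (of_real :: real \<Rightarrow> 'a::{real_algebra_1,comm_ring_1}) (prod f A) = (\<Prod>x\<in>A. map_poly of_real (f x))"
  by (induction A rule: infinite_finite_induct) (auto simp: map_poly_of_real_mult)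

lemma map_poly_of_real_of_int: "map_poly (of_real :: real \<Rightarrow> 'a::{real_algebra_1,comm_ring_1}) (of_int k) = of_int k"
  by (rule poly_eqI) (simp add: coeff_map_poly of_int_poly coeff_pCons split: nat.split)

lemma map_poly_of_real_det: "map_poly (of_real :: real \<Rightarrow> 'a::{real_algebra_1,comm_ring_1}) (det M) = det (\<chi> i j. map_poly of_real (M$i$j))"
  unfolding det_def by (simp add: map_poly_of_real_sum map_poly_of_real_prod map_poly_of_real_mult map_poly_of_real_of_int)

lemma poly_map_poly_of_real: "poly (map_poly (of_real :: real \<Rightarrow> 'a::{real_algebra_1,comm_ring_1}) p) (of_real x) = of_real (poly p x)"
  by (induction p) (simp_all add: map_poly_pCons)

lemma poly_charpoly: "poly (charpoly X) r = det (\<chi> i j. (if i = j then r else 0) - X$i$j)"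
  unfolding charpoly_def poly_det by (rule arg_cong[where f=det]) (auto simp: vec_eq_iff)

lemma poly_charpoly_complex: "poly (map_poly complex_of_real (charpoly X)) c = det (\<chi> i j. (if i = j then c else 0) - of_real (X$i$j))"
  unfolding charpoly_def map_poly_of_real_det poly_det
  by (rule arg_cong[where f=det]) (auto simp: vec_eq_iff map_poly_pCons)

lemma det0_nullvec:
  fixes A :: "'a::field^'n^'n"
  assumes "det A = 0"
  obtains v where "v \<noteq> 0" "A *v v = 0"
proof -
  have "\<not> inj ((*v) A)"
    using det_nz_iff_inj_gen[OF matrix_vector_mul_linear_gen[of A]] assms
    by (simp add: matrix_of_matrix_vector_mul)
  then obtain x y where "x \<noteq> y" "A *v x = A *v y" unfolding inj_def by blast
  then have "x - y \<noteq> 0" "A *v (x - y) = 0" by (auto simp: matrix_vector_mult_diff_distrib)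
  then show ?thesis using that by blast
qed



lemma sym_eig_real:
  fixes X :: "real^'p^'p"
  assumes sym: "transpose X = X"
    and d: "det (\<chi> i j. (if i = j then c else 0) - of_real (X$i$j)) = (0::complex)"
  shows "c \<in> \<real>"
proof -
  obtain v where v0: "v \<noteq> 0" and Av: "(\<chi> i j. (if i = j then c else 0) - of_real (X$i$j)) *v v = 0"
    using det0_nullvec[OF d] by blast
  have Xs: "X$i$j = X$j$i" for i j proof -
    have "transpose X $ j $ i = X $ j $ i" using sym by simp
    then show ?thesis by (simp add: transpose_def)
  qed
  have ev: "(\<Sum>j\<in>UNIV. of_real (X$i$j) * v$j) = c * v$i" for i
  proof -
    have "0 = (\<Sum>j\<in>UNIV. ((if i = j then c else 0) - of_real (X$i$j)) * v$j)"
      using Av by (simp add: vec_eq_iff matrix_vector_mult_def)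
    also have "\<dots> = c * v$i - (\<Sum>j\<in>UNIV. of_real (X$i$j) * v$j)"
    proof -
      have e: "((if i = j then c else 0) - of_real (X$i$j)) * v$j = (if i = j then c * v$j else 0) - of_real (X$i$j) * v$j" for j
        by (auto simp: left_diff_distrib)
      show ?thesis unfolding e sum_subtractf by (simp add: sum.delta')
    qed
    finally show ?thesis by (metis eq_iff_diff_eq_0)
  qed
  define s where "s = (\<Sum>i\<in>UNIV. cnj (v$i) * (\<Sum>j\<in>UNIV. of_real (X$i$j) * v$j))"
  define n where "n = (\<Sum>i\<in>UNIV. (cmod (v$i))^2)"
  have s1: "s = c * of_real n"
  proof -
    have "s = (\<Sum>i\<in>UNIV. c * (cnj (v$i) * v$i))" unfolding s_def ev by (simp add: algebra_simps)
    also have "\<dots> = (\<Sum>i\<in>UNIV. c * of_real ((cmod (v$i))^2))"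
    proof (rule sum.cong)
      fix i :: 'p
      have "cnj (v$i) * v$i = of_real ((cmod (v$i))^2)"
        by (metis complex_norm_square mult.commute of_real_power)
      then show "c * (cnj (v$i) * v$i) = c * of_real ((cmod (v$i))^2)" by simp
    qed simp
    also have "\<dots> = c * of_real n" unfolding n_def
      by (simp add: sum_distrib_left)
    finally show ?thesis .
  qed
  have "cnj s = (\<Sum>i\<in>UNIV. \<Sum>j\<in>UNIV. v$i * of_real (X$i$j) * cnj (v$j))"
    unfolding s_def by (simp add: sum_distrib_left algebra_simps)
  also have "\<dots> = (\<Sum>j\<in>UNIV. \<Sum>i\<in>UNIV. v$i * of_real (X$i$j) * cnj (v$j))"
    by (rule sum.swap)
  also have "\<dots> = (\<Sum>j\<in>UNIV. \<Sum>i\<in>UNIV. cnj (v$j) * (of_real (X$j$i) * v$i))"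
  proof (intro sum.cong refl)
    fix i j
    show "v$i * of_real (X$i$j) * cnj (v$j) = cnj (v$j) * (of_real (X$j$i) * v$i)"
      using Xs[of i j] by (simp add: mult_ac)
  qed
  also have "\<dots> = s"
    unfolding s_def by (simp add: sum_distrib_left)
  finally have "Im (cnj s) = Im s" by simp
  then have "Im s = 0" by simp
  obtain k where "v$k \<noteq> 0" using v0 by (metis vec_eq_iff zero_index)
  then have "n > 0" unfolding n_def
    by (intro sum_pos2[of UNIV k]) auto
  have "Im s = Im c * n" using s1 by simp
  with \<open>Im s = 0\<close> \<open>n > 0\<close> have "Im c = 0" by simp
  then show ?thesis by (simp add: complex_is_Real_iff)
qed



lemma psd_eig_nonneg:
  fixes X :: "real^'p^'p"
  assumes psd: "X \<in> psd_cone" and r: "poly (charpoly X) r = 0"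
  shows "r \<ge> 0"
proof -
  have d: "det (\<chi> i j. (if i = j then r else 0) - X$i$j) = 0" using r by (simp add: poly_charpoly)
  obtain v where v0: "v \<noteq> 0" and Av: "(\<chi> i j. (if i = j then r else 0) - X$i$j) *v v = 0"
    using det0_nullvec[OF d] by blast
  have "(\<chi> i j. (if i = j then r else 0) - X$i$j) = r *\<^sub>R mat 1 - X"
    by (simp add: vec_eq_iff mat_def)
  with Av have "(r *\<^sub>R mat 1 - X) *v v = 0" by simp
  then have "(r *\<^sub>R mat 1) *v v - X *v v = 0" by (simp only: matrix_vector_mult_diff_rdistrib)
  moreover have "(r *\<^sub>R mat 1) *v v = r *\<^sub>R v"
    by (metis scaleR_matrix_vector_assoc matrix_vector_mul_lid)
  ultimately have "X *v v = r *\<^sub>R v" by simp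
  moreover have "\<forall>w. 0 \<le> w \<bullet> (X *v w)" using psd by (simp add: psd_cone_def)
  ultimately have "0 \<le> v \<bullet> (r *\<^sub>R v)" by metis
  then have "0 \<le> r * (v \<bullet> v)" by simp
  moreover have "v \<bullet> v > 0" using v0 by simp
  ultimately show ?thesis by (simp add: zero_le_mult_iff)
qed



lemma real_roots_split:
  fixes P :: "real poly"
  assumes "P \<noteq> 0" and "\<And>c. poly (map_poly complex_of_real P) c = 0 \<Longrightarrow> c \<in> \<real>"
  shows "size (proots P) = degree P"
  using assms
proof (induction "degree P" arbitrary: P)
  case 0
  then obtain a where "P = [:a:]" by (metis degree_eq_zeroE)
  then show ?case by simp
next
  case (Suc m)
  define Q where "Q = map_poly complex_of_real P"
  have dQ: "degree Q = Suc m" unfolding Q_def using Suc(2) by (simp add: degree_map_poly)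
  then have "Q \<noteq> 0" by auto
  have "size (proots Q) > 0" using dQ by (simp add: size_proots_complex)
  then have "proots Q \<noteq> {#}" by auto
  then obtain c where "c \<in># proots Q" by (rule multiset_nonemptyE)
  then have "poly Q c = 0" using \<open>Q \<noteq> 0\<close> by (simp only: set_count_proots[OF \<open>Q \<noteq> 0\<close>] mem_Collect_eq)
  then have "c \<in> \<real>" using Suc(4) unfolding Q_def by blast
  then obtain r where cr: "c = of_real r" by (metis Reals_cases)
  have "poly P r = 0"
    using \<open>poly Q c = 0\<close> unfolding Q_def cr poly_map_poly_of_real by simp
  then obtain R where PR: "P = [:-r, 1:] * R" by (metis dvdE poly_eq_0_iff_dvd)
  have "R \<noteq> 0" using Suc(3) PR by auto
  have "degree ([:-r, 1:] * R) = degree [:-r, 1:] + degree R"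
    by (rule degree_mult_eq) (use \<open>R \<noteq> 0\<close> in auto)
  then have dR: "degree R = m" using PR Suc(2) by simp
  have "\<And>c. poly (map_poly complex_of_real R) c = 0 \<Longrightarrow> c \<in> \<real>"
  proof -
    fix c assume "poly (map_poly complex_of_real R) c = 0"
    then have "poly (map_poly complex_of_real P) c = 0"
      unfolding PR map_poly_of_real_mult by simp
    then show "c \<in> \<real>" using Suc(4) by blast
  qed
  then have "size (proots R) = m" using Suc(1)[of R] dR \<open>R \<noteq> 0\<close> by simp
  moreover have "proots P = proots [:-r, 1:] + proots R"
    unfolding PR by (rule proots_mult) (use \<open>R \<noteq> 0\<close> in auto)
  moreover have "size (proots [:-r, 1:]) = 1"
    by (simp only: proots_linear_factor) simp
  ultimately show ?case using Suc(2) by simp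
qed



lemma P_pen_formula:
  assumes a: "a > 0" and y: "0 \<le> y" "y \<le> a * lam"
  shows "P_pen a lam y = lam * y - y^2 / (2 * a)"
proof -
  have "integral {0..y} (\<lambda>t. max (a * lam - t) 0 / a) = integral {0..y} (\<lambda>t. lam - t / a)"
  proof (rule integral_cong)
    fix t assume "t \<in> {0..y}"
    then have "max (a * lam - t) 0 = a * lam - t" using y by auto
    then show "max (a * lam - t) 0 / a = lam - t / a" using a by (simp add: field_simps)
  qed
  also have "\<dots> = (lam * y - y^2 / (2 * a)) - (lam * 0 - 0^2 / (2 * a))"
  proof (rule integral_unique, rule fundamental_theorem_of_calculus)
    show "0 \<le> y" using y by simp
    fix x :: real
    have "((\<lambda>t. lam * t - t^2 / (2 * a)) has_real_derivative (lam - x / a)) (at x within {0..y})"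
      using a by (auto intro!: derivative_eq_intros simp: field_simps)
    then show "((\<lambda>t. lam * t - t^2 / (2 * a)) has_vector_derivative (lam - x / a)) (at x within {0..y})"
      by (simp add: has_real_derivative_iff_has_vector_derivative)
  qed
  finally show ?thesis unfolding P_pen_def by simp
qed

lemma P_pen_deriv:
  assumes a: "a > 0" and x: "0 < x" "x < a * lam"
  shows "deriv (P_pen a lam) x = lam - x / a"
proof -
  have "((\<lambda>t. lam * t - t^2 / (2 * a)) has_real_derivative (lam - x / a)) (at x)"
    using a by (auto intro!: derivative_eq_intros simp: field_simps)
  then have "(P_pen a lam has_real_derivative (lam - x / a)) (at x)"
    by (rule has_field_derivative_transform_within_open[where S="{0<..<a*lam}"])
       (use x a in \<open>auto simp: P_pen_formula\<close>)
  then show ?thesis by (rule DERIV_imp_deriv)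
qed

lemma P_pen_deriv2:
  assumes a: "a > 0" and x: "0 < x" "x < a * lam"
  shows "deriv (deriv (P_pen a lam)) x = - 1 / a"
proof -
  have "((\<lambda>t. lam - t / a) has_real_derivative (- 1 / a)) (at x)"
    using a by (auto intro!: derivative_eq_intros)
  then have "(deriv (P_pen a lam) has_real_derivative (- 1 / a)) (at x)"
    by (rule has_field_derivative_transform_within_open[where S="{0<..<a*lam}"])
       (use x a in \<open>auto simp: P_pen_deriv\<close>)
  then show ?thesis by (rule DERIV_imp_deriv)
qed


lemma key_pointwise:
  fixes X :: "real^'p^'p" and f :: "real^'p^'p \<Rightarrow> 'w \<Rightarrow> real"
  assumes S: "S3ONC a lam UL f n Zs X"
    and a: "a > 0" and UL: "UL \<ge> 1" and aUL: "a < 1 / UL"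
    and j: "j \<in> {1..CARD('p)}"
  shows "\<bar>sigma X j\<bar> \<notin> {0<..<a * lam}"
proof
  assume contra: "\<bar>sigma X j\<bar> \<in> {0<..<a * lam}"
  have psd: "X \<in> psd_cone" using S by (simp add: S3ONC_def)
  then have sym: "transpose X = X" by (simp add: psd_cone_def)
  have dP: "degree (charpoly X) = CARD('p)" by (rule degree_charpoly)
  have "CARD('p) > 0" by simp
  then have P0: "charpoly X \<noteq> 0" using dP by auto
  have "size (proots (charpoly X)) = degree (charpoly X)"
  proof (rule real_roots_split[OF P0])
    fix c assume "poly (map_poly complex_of_real (charpoly X)) c = 0"
    then show "c \<in> \<real>" using sym_eig_real[OF sym] by (simp add: poly_charpoly_complex)
  qed
  then have len: "length (eigs X) = CARD('p)"
    unfolding eigs_def dP by (metis length_rev mset_sorted_list_of_multiset size_mset)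
  have "sigma X j \<in> set (eigs X)"
    unfolding sigma_def using j len by auto
  then have "sigma X j \<in># proots (charpoly X)" unfolding eigs_def by simp
  then have "poly (charpoly X) (sigma X j) = 0" using P0 by simp
  then have nn: "sigma X j \<ge> 0" using psd_eig_nonneg[OF psd] by blast
  then have inI: "sigma X j \<in> {0<..<a * lam}" using contra by simp
  then have "0 \<le> UL + deriv (deriv (P_pen a lam)) (sigma X j)"
    using S j by (simp add: S3ONC_def)
  then have "0 \<le> UL - 1 / a" using P_pen_deriv2[OF a, of "sigma X j" lam] inI by simp
  moreover have "a * UL < 1" using aUL UL by (simp add: field_simps)
  then have "UL < 1 / a" using a by (simp add: field_simps)
  ultimately show False by simp
qed

theorem proposition8:
  fixes M :: "'s measure"
    and Z :: "nat \<Rightarrow> 's \<Rightarrow> real^'q"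
    and W :: "(real^'q) set"
    and f :: "real^'p^'p \<Rightarrow> real^'q \<Rightarrow> real"
    and n :: nat and a lam UL :: real
    and XR :: "'s \<Rightarrow> real^'p^'p"
  assumes "prob_space M"
    and "n \<ge> 1"
    and "a > 0" and "lam > 0" and "UL \<ge> 1"
    and "\<forall>i\<in>{1..n}. Z i \<in> borel_measurable M"
    and "prob_space.indep_vars M (\<lambda>_. borel) Z {1..n}"
    and "\<forall>i\<in>{1..n}. distr M borel (Z i) = distr M borel (Z 1)"
    and "\<forall>i\<in>{1..n}. \<forall>\<omega>\<in>space M. Z i \<omega> \<in> W"
    and "(\<lambda>(X, z). f X z) \<in> borel_measurable borel"
    and "a < 1 / UL"
    and "\<forall>\<omega>\<in>space M. XR \<omega> \<in> psd_cone"
    and "AE \<omega> in M. S3ONC a lam UL f n (\<lambda>i. Z i \<omega>) (XR \<omega>)"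
  shows "AE \<omega> in M. \<forall>j\<in>{1..CARD('p)}. \<bar>sigma (XR \<omega>) j\<bar> \<notin> {0<..<a * lam}"
  using assms(13)
proof (rule AE_mp, intro AE_I2 impI ballI)
  fix \<omega> j
  assume "S3ONC a lam UL f n (\<lambda>i. Z i \<omega>) (XR \<omega>)" "j \<in> {1..CARD('p)}"
  then show "\<bar>sigma (XR \<omega>) j\<bar> \<notin> {0<..<a * lam}"
    using key_pointwise assms(3,5,11) by blast
qed

end
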